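(* Let $n>2k$, $k\ge t+3$, and let $\mathcal F\subseteq\binom{[n]}{k}$ be a $t$-intersecting family with $\tau_t(\mathcal F)=t+2$. Then for every $E\in\binom{[n]}{t+1}$, $$\left|\{T\in\mathcal T_t(\mathcal F): E\subseteq T\}\right|\le k-t+1.$$
   Context: A family is $t$-intersecting if any two members meet in at least $t$ elements. A $t$-cover of $\mathcal F$ is a set $S\subseteq[n]$ with $|S\cap F|\ge t$ for all $F\in\mathcal F$; $\tau_t(\mathcal F)$ is the minimum size of a $t$-cover, and $\mathcal T_t(\mathcal F)$ is the set of all $t$-covers of $\mathcal F$ of size $\tau_t(\mathcal F)$. *)

theory Defs
  imports Main
begin

definition t_intersecting :: "nat \<Rightarrow> nat set set \<Rightarrow> bool" where
  "t_intersecting t F \<longleftrightarrow> (\<forall>A\<in>F. \<forall>B\<in>F. card (A \<inter> B) \<ge> t)"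

definition is_t_cover :: "nat \<Rightarrow> nat \<Rightarrow> nat set set \<Rightarrow> nat set \<Rightarrow> bool" where
  "is_t_cover n t F S \<longleftrightarrow> S \<subseteq> {1..n} \<and> (\<forall>F'\<in>F. card (S \<inter> F') \<ge> t)"

definition tau_t :: "nat \<Rightarrow> nat \<Rightarrow> nat set set \<Rightarrow> nat" where
  "tau_t n t F = (LEAST m. \<exists>S. is_t_cover n t F S \<and> card S = m)"

definition min_t_covers :: "nat \<Rightarrow> nat \<Rightarrow> nat set set \<Rightarrow> nat set set" where
  "min_t_covers n t F = {S. is_t_cover n t F S \<and> card S = tau_t n t F}"

end

theory Submission
  imports Defs
begin

theorem mainTheorem7:
  fixes n k t :: nat and F :: "nat set set" and E :: "nat set"
  assumes "t \<ge> 1"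
    and "n > 2 * k" and "k \<ge> t + 3"
    and "\<forall>A\<in>F. A \<subseteq> {1..n} \<and> card A = k"
    and "t_intersecting t F"
    and "tau_t n t F = t + 2"
    and "E \<subseteq> {1..n}" and "card E = t + 1"
  shows "card {T \<in> min_t_covers n t F. E \<subseteq> T} \<le> k - t + 1"
proof -
  have finE: "finite E" using assms(7) finite_subset by blast
  have "\<not> is_t_cover n t F E"
  proof
    assume "is_t_cover n t F E"
    then have "tau_t n t F \<le> card E" unfolding tau_t_def by (intro Least_le) blast
    then show False using assms(6,8) by simp
  qed
  then obtain F0 where F0: "F0 \<in> F" "card (E \<inter> F0) < t"
    using assms(7) unfolding is_t_cover_def by force
  have cF0: "card F0 = k" "finite F0" using F0(1) assms(4)
    by (auto intro: finite_subset)
  let ?S = "{T \<in> min_t_covers n t F. E \<subseteq> T}"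
  have key: "\<exists>x\<in>F0 - E. T = insert x E \<and> t \<le> card (E \<inter> F0) + 1" if "T \<in> ?S" for T
  proof -
    from that have T: "is_t_cover n t F T" "card T = t + 2" "E \<subseteq> T"
      unfolding min_t_covers_def using assms(6) by auto
    have finT: "finite T" using T(1) unfolding is_t_cover_def using finite_subset by blast
    have "card (T - E) = 1" using T(2,3) finT assms(8) by (simp add: card_Diff_subset finite_subset)
    then obtain x where x: "T - E = {x}" by (auto simp: card_Suc_eq)
    then have Tx: "T = insert x E" "x \<notin> E" using T(3) by auto
    have ge: "t \<le> card (T \<inter> F0)" using T(1) F0(1) unfolding is_t_cover_def by auto
    have "x \<in> F0"
    proof (rule ccontr)
      assume "x \<notin> F0"
      then have "T \<inter> F0 = E \<inter> F0" using Tx by auto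
      then show False using ge F0(2) by simp
    qed
    moreover have "T \<inter> F0 = insert x (E \<inter> F0)" using Tx \<open>x \<in> F0\<close> by auto
    then have "card (T \<inter> F0) \<le> card (E \<inter> F0) + 1"
      using finE by (simp add: card_insert_if)
    ultimately show ?thesis using Tx ge by auto
  qed
  show ?thesis
  proof (cases "?S = {}")
    case True then have "card ?S = 0" by (simp only: card.empty)
    then show ?thesis by linarith
  next
    case False
    then obtain T0 where T0: "T0 \<in> ?S" by blast
    from key[OF T0] have lb: "t \<le> card (E \<inter> F0) + 1" by (elim bexE conjE)
    have "?S \<subseteq> (\<lambda>x. insert x E) ` (F0 - E)"
    proof
      fix T assume "T \<in> ?S"
      from key[OF this] obtain x where "x \<in> F0 - E" "T = insert x E" by blast
      then show "T \<in> (\<lambda>x. insert x E) ` (F0 - E)" by (intro image_eqI)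
    qed
    then have "card ?S \<le> card ((\<lambda>x. insert x E) ` (F0 - E))"
      using cF0(2) by (intro card_mono) auto
    also have "\<dots> \<le> card (F0 - E)" using card_image_le cF0(2) by blast
    also have "\<dots> = k - card (E \<inter> F0)" using cF0 by (simp add: card_Diff_subset_Int Int_commute)
    finally show ?thesis using lb by linarith
  qed
qed

end
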